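(* Let $M$ be a closed, simply connected, differentiable 3-manifold. If a Morse function $f:M\to\mathbb{R}$ has exactly one critical point of index $0$ and exactly one critical point of index $3$, then for each (regular) level $a$ the level set $\partial M^a=\{x\in M\mid f(x)=a\}$ is connected.
   Context: A Morse function is a smooth function with finitely many critical points, all nondegenerate, with Morse indices in $\{0,1,2,3\}$. $M^a=\{x\in M\mid f(x)\le a\}$ and $\partial M^a=f^{-1}(a)$. *)

theory Defs
  imports "HOL-Analysis.Analysis"
begin

fun Ck_on :: "nat \<Rightarrow> 'a::euclidean_space set \<Rightarrow> ('a \<Rightarrow> 'b::real_normed_vector) \<Rightarrow> bool" where
  "Ck_on 0 S g = continuous_on S g"
| "Ck_on (Suc k) S g =
     (g differentiable_on S \<and> (\<forall>b\<in>Basis. Ck_on k S (\<lambda>x. frechet_derivative g (at x) b)))"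

definition smooth_on :: "'a::euclidean_space set \<Rightarrow> ('a \<Rightarrow> 'b::real_normed_vector) \<Rightarrow> bool" where
  "smooth_on S g \<longleftrightarrow> (\<forall>k. Ck_on k S g)"

text \<open>A local smooth parametrisation (inverse chart) of a 3-dimensional embedded submanifold M.\<close>
definition chart3 :: "'a::euclidean_space set \<Rightarrow> (real^3 \<Rightarrow> 'a) \<Rightarrow> (real^3) set \<Rightarrow> bool" where
  "chart3 M \<phi> V \<longleftrightarrow> open V \<and> openin (top_of_set M) (\<phi> ` V) \<and>
     (\<exists>\<psi>. homeomorphism V (\<phi> ` V) \<phi> \<psi>) \<and> smooth_on V \<phi> \<and>
     (\<forall>u\<in>V. inj (frechet_derivative \<phi> (at u)))"

definition smooth_3_manifold :: "'a::euclidean_space set \<Rightarrow> bool" where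
  "smooth_3_manifold M \<longleftrightarrow> (\<forall>p\<in>M. \<exists>\<phi> V. chart3 M \<phi> V \<and> p \<in> \<phi> ` V)"

definition smooth_fun_on :: "'a::euclidean_space set \<Rightarrow> ('a \<Rightarrow> real) \<Rightarrow> bool" where
  "smooth_fun_on M f \<longleftrightarrow> (\<forall>\<phi> V. chart3 M \<phi> V \<longrightarrow> smooth_on V (f \<circ> \<phi>))"

definition crit_points :: "'a::euclidean_space set \<Rightarrow> ('a \<Rightarrow> real) \<Rightarrow> 'a set" where
  "crit_points M f = {p\<in>M. \<forall>\<phi> V u. chart3 M \<phi> V \<and> u \<in> V \<and> \<phi> u = p \<longrightarrow>
      frechet_derivative (f \<circ> \<phi>) (at u) = (\<lambda>_. 0)}"

definition hess :: "(real^3 \<Rightarrow> real) \<Rightarrow> real^3 \<Rightarrow> real^3 \<Rightarrow> real^3 \<Rightarrow> real" where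
  "hess g u v w = frechet_derivative (\<lambda>x. frechet_derivative g (at x) v) (at u) w"

definition nondeg_at :: "(real^3 \<Rightarrow> real) \<Rightarrow> real^3 \<Rightarrow> bool" where
  "nondeg_at g u \<longleftrightarrow> (\<forall>v. (\<forall>w. hess g u v w = 0) \<longrightarrow> v = 0)"

definition index_at :: "(real^3 \<Rightarrow> real) \<Rightarrow> real^3 \<Rightarrow> nat" where
  "index_at g u = Max {dim W | W. subspace W \<and> (\<forall>w\<in>W. w \<noteq> 0 \<longrightarrow> hess g u w w < 0)}"

definition morse_function :: "'a::euclidean_space set \<Rightarrow> ('a \<Rightarrow> real) \<Rightarrow> bool" where
  "morse_function M f \<longleftrightarrow> smooth_fun_on M f \<and> finite (crit_points M f) \<and>
     (\<forall>p\<in>crit_points M f. \<forall>\<phi> V u. chart3 M \<phi> V \<and> u \<in> V \<and> \<phi> u = p \<longrightarrow>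
        nondeg_at (f \<circ> \<phi>) u \<and> index_at (f \<circ> \<phi>) u \<in> {0,1,2,3})"

definition morse_index :: "'a::euclidean_space set \<Rightarrow> ('a \<Rightarrow> real) \<Rightarrow> 'a \<Rightarrow> nat \<Rightarrow> bool" where
  "morse_index M f p k \<longleftrightarrow> (\<exists>\<phi> V u. chart3 M \<phi> V \<and> u \<in> V \<and> \<phi> u = p \<and> index_at (f \<circ> \<phi>) u = k)"

end

theory Submission
  imports Defs
begin

lemma line_deriv:
  fixes g :: "'n::real_normed_vector \<Rightarrow> real"
  assumes "(g has_derivative D) (at (x0 + s *\<^sub>R v))"
  shows "((\<lambda>s. g (x0 + s *\<^sub>R v)) has_real_derivative D v) (at s)"
proof -
  interpret bounded_linear D using assms has_derivative_bounded_linear by blast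
  have "((\<lambda>r. x0 + r *\<^sub>R v) has_derivative (\<lambda>r. r *\<^sub>R v)) (at s)"
    by (intro derivative_eq_intros) auto
  then have "((\<lambda>r. g (x0 + r *\<^sub>R v)) has_derivative (\<lambda>k. D (k *\<^sub>R v))) (at s)"
    using assms by (rule has_derivative_compose)
  moreover have "(\<lambda>k. D (k *\<^sub>R v)) = (*) (D v)" by (auto simp: scaleR mult.commute)
  ultimately show ?thesis unfolding has_field_derivative_def by simp
qed

lemma second_order_min:
  fixes g :: "'n::real_normed_vector \<Rightarrow> real"
  assumes V: "open V" "u \<in> V" and dg: "\<And>x. x \<in> V \<Longrightarrow> (g has_derivative D x) (at x)"
    and dB: "((\<lambda>x. D x w) has_derivative Bw) (at u)"
    and mn: "eventually (\<lambda>y. g u \<le> g y) (at u)"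
  shows "Bw w \<ge> 0"
proof (rule ccontr)
  assume neg: "\<not> Bw w \<ge> 0"
  interpret Bw: bounded_linear Bw using dB has_derivative_bounded_linear by blast
  have w0: "w \<noteq> 0" using neg by auto
  have Du: "D u = (\<lambda>h. 0)" using has_derivative_local_min[OF dg[OF V(2)] mn] .
  have "((\<lambda>s. D (u + s *\<^sub>R w) w) has_real_derivative Bw w) (at 0)"
    using line_deriv[of "\<lambda>x. D x w" Bw u 0 w] dB by simp
  then obtain d where d: "d > 0" "\<And>h. h > 0 \<Longrightarrow> h < d \<Longrightarrow> D (u + (0+h) *\<^sub>R w) w < D (u + 0 *\<^sub>R w) w"
    using DERIV_neg_dec_right[of _ "Bw w" 0] neg by force
  have d': "\<And>h. h > 0 \<Longrightarrow> h < d \<Longrightarrow> D (u + h *\<^sub>R w) w < 0" using d(2) Du by fastforce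
  obtain r where r: "r > 0" "ball u r \<subseteq> V" using V open_contains_ball by blast
  obtain e where e: "e > 0" "\<And>y. y \<noteq> u \<Longrightarrow> dist y u < e \<Longrightarrow> g u \<le> g y"
    using mn unfolding eventually_at by blast
  define t where "t = min d (min r e / norm w) / 2"
  have nw: "norm w > 0" using w0 by simp
  have t0: "t > 0" using d r e nw by (simp add: t_def)
  have td: "t < d" using d r e nw by (simp add: t_def)
  have tr: "t * norm w < r" and te: "t * norm w < e"
  proof -
    have "t \<le> min r e / norm w / 2" unfolding t_def by (simp add: divide_right_mono)
    then have "t * norm w \<le> min r e / 2" using nw by (simp add: field_simps)
    then show "t * norm w < r" "t * norm w < e" using r e by auto
  qed
  have inV: "u + s *\<^sub>R w \<in> V" if "0 \<le> s" "s \<le> t" for s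
  proof -
    have "norm (s *\<^sub>R w) \<le> t * norm w" using that by (simp add: mult_right_mono)
    then show ?thesis using r tr by (auto simp: dist_norm intro!: subsetD[OF r(2)])
  qed
  have "\<exists>z>0. z < t \<and> g (u + t *\<^sub>R w) - g (u + 0 *\<^sub>R w) = (t - 0) * D (u + z *\<^sub>R w) w"
    by (rule MVT2[OF t0]) (rule line_deriv, use dg inV in auto)
  then obtain z where z: "0 < z" "z < t" "g (u + t *\<^sub>R w) - g u = t * D (u + z *\<^sub>R w) w" by auto
  have "D (u + z *\<^sub>R w) w < 0" using d' z td by auto
  then have "t * D (u + z *\<^sub>R w) w < 0" using t0 by (simp add: mult_pos_neg)
  then have "g (u + t *\<^sub>R w) < g u" using z by linarith
  moreover have "g u \<le> g (u + t *\<^sub>R w)"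
    using e t0 w0 te by (intro e(2)) (auto simp: dist_norm)
  ultimately show False by simp
qed

lemma delta_bound:
  fixes g :: "'n::real_normed_vector \<Rightarrow> real"
  assumes t0: "t > 0" and e0: "e \<ge> 0"
    and inV: "\<And>y. norm y \<le> t * (norm v + norm w) \<Longrightarrow> u + y \<in> V"
    and dg: "\<And>x. x \<in> V \<Longrightarrow> (g has_derivative D x) (at x)"
    and lin: "bounded_linear Bv"
    and rem: "\<And>y. norm y \<le> t * (norm v + norm w) \<Longrightarrow> \<bar>D (u + y) v - D u v - Bv y\<bar> \<le> e * norm y"
  shows "\<bar>(g (u + t *\<^sub>R w + t *\<^sub>R v) - g (u + t *\<^sub>R v) - g (u + t *\<^sub>R w) + g u) - t^2 * Bv w\<bar>
           \<le> e * t^2 * (2 * norm v + norm w)"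
proof -
  interpret Bv: bounded_linear Bv by (rule lin)
  define h where "h s = g (u + t *\<^sub>R w + s *\<^sub>R v) - g (u + s *\<^sub>R v)" for s
  have nv: "norm (s *\<^sub>R v) \<le> t * norm v" if "0 \<le> s" "s \<le> t" for s
    using that by (simp add: mult_right_mono)
  have in1: "u + t *\<^sub>R w + s *\<^sub>R v \<in> V" if "0 \<le> s" "s \<le> t" for s
  proof -
    have "norm (t *\<^sub>R w + s *\<^sub>R v) \<le> t * norm w + t * norm v"
      using nv[OF that] norm_triangle_ineq[of "t *\<^sub>R w" "s *\<^sub>R v"] t0 by simp
    then show ?thesis using inV[of "t *\<^sub>R w + s *\<^sub>R v"] by (simp add: algebra_simps)
  qed
  have in2: "u + s *\<^sub>R v \<in> V" if "0 \<le> s" "s \<le> t" for s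
  proof -
    have "norm (s *\<^sub>R v) \<le> t * (norm v + norm w)"
      using nv[OF that] t0 by (smt (verit) mult_left_mono norm_ge_zero distrib_left)
    then show ?thesis using inV by blast
  qed
  have "\<exists>z>0. z < t \<and> h t - h 0 = (t - 0) * (D (u + t *\<^sub>R w + z *\<^sub>R v) v - D (u + z *\<^sub>R v) v)"
    unfolding h_def
  proof (rule MVT2[OF t0])
    fix s :: real assume s: "0 \<le> s" "s \<le> t"
    show "((\<lambda>s. g (u + t *\<^sub>R w + s *\<^sub>R v) - g (u + s *\<^sub>R v)) has_real_derivative
       D (u + t *\<^sub>R w + s *\<^sub>R v) v - D (u + s *\<^sub>R v) v) (at s)"
      by (intro DERIV_diff line_deriv dg in1 in2 s)
  qed
  then obtain z where z: "0 < z" "z < t"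
    "h t - h 0 = t * (D (u + t *\<^sub>R w + z *\<^sub>R v) v - D (u + z *\<^sub>R v) v)" by auto
  define y1 where "y1 = t *\<^sub>R w + z *\<^sub>R v"
  define y2 where "y2 = z *\<^sub>R v"
  have ny2: "norm y2 \<le> t * norm v" using nv[of z] z unfolding y2_def by simp
  have ny1: "norm y1 \<le> t * norm w + t * norm v"
    using nv[of z] z norm_triangle_ineq[of "t *\<^sub>R w" "z *\<^sub>R v"] t0 unfolding y1_def by simp
  have r1: "\<bar>D (u + y1) v - D u v - Bv y1\<bar> \<le> e * norm y1"
    using ny1 by (intro rem) (simp add: algebra_simps)
  have r2: "\<bar>D (u + y2) v - D u v - Bv y2\<bar> \<le> e * norm y2"
    using ny2 t0 by (intro rem) (smt (verit) mult_left_mono norm_ge_zero distrib_left)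
  have By: "Bv y1 - Bv y2 = t * Bv w" unfolding y1_def y2_def by (simp add: Bv.add Bv.scaleR)
  have "D (u + t *\<^sub>R w + z *\<^sub>R v) v - D (u + z *\<^sub>R v) v = D (u + y1) v - D (u + y2) v"
    unfolding y1_def y2_def by (simp add: add.assoc)
  then have diff: "\<bar>(D (u + t *\<^sub>R w + z *\<^sub>R v) v - D (u + z *\<^sub>R v) v) - t * Bv w\<bar> \<le> e * norm y1 + e * norm y2"
    using r1 r2 By by linarith
  have "e * norm y1 + e * norm y2 \<le> e * (t * norm w + t * norm v) + e * (t * norm v)"
    using ny1 ny2 e0 by (intro add_mono mult_left_mono) auto
  then have diff2: "\<bar>(D (u + t *\<^sub>R w + z *\<^sub>R v) v - D (u + z *\<^sub>R v) v) - t * Bv w\<bar> \<le> e * t * (2 * norm v + norm w)"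
    using diff by (simp add: algebra_simps)
  have "(g (u + t *\<^sub>R w + t *\<^sub>R v) - g (u + t *\<^sub>R v) - g (u + t *\<^sub>R w) + g u) - t^2 * Bv w
        = t * ((D (u + t *\<^sub>R w + z *\<^sub>R v) v - D (u + z *\<^sub>R v) v) - t * Bv w)"
    using z(3) unfolding h_def by (simp add: algebra_simps power2_eq_square)
  also have "\<bar>\<dots>\<bar> \<le> t * (e * t * (2 * norm v + norm w))"
    using diff2 t0 by (simp add: abs_mult)
  finally show ?thesis by (simp add: algebra_simps power2_eq_square)
qed

lemma deriv_sym_core:
  fixes g :: "'n::real_normed_vector \<Rightarrow> real"
  assumes V: "open V" "u \<in> V" and dg: "\<And>x. x \<in> V \<Longrightarrow> (g has_derivative D x) (at x)"
    and dv: "((\<lambda>x. D x v) has_derivative Bv) (at u)"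
    and dw: "((\<lambda>x. D x w) has_derivative Bw) (at u)"
  shows "Bv w = Bw v"
proof (rule ccontr)
  assume ne: "Bv w \<noteq> Bw v"
  define c where "c = \<bar>Bv w - Bw v\<bar>"
  have c0: "c > 0" using ne by (simp add: c_def)
  define N where "N = norm v + norm w"
  define e where "e = c / (4 * N + 1)"
  have N0: "N \<ge> 0" by (simp add: N_def)
  have e0: "e > 0" using c0 N0 by (simp add: e_def)
  obtain dv' where dv': "dv' > 0" "\<And>y. norm (y - u) < dv' \<Longrightarrow> norm (D y v - D u v - Bv (y - u)) \<le> e * norm (y - u)"
    using dv e0 unfolding has_derivative_at_alt by blast
  obtain dw' where dw': "dw' > 0" "\<And>y. norm (y - u) < dw' \<Longrightarrow> norm (D y w - D u w - Bw (y - u)) \<le> e * norm (y - u)"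
    using dw e0 unfolding has_derivative_at_alt by blast
  obtain r where r: "r > 0" "ball u r \<subseteq> V" using V open_contains_ball by blast
  define m where "m = min (min dv' dw') r"
  have m0: "m > 0" using dv' dw' r by (simp add: m_def)
  define t where "t = m / (2 * (N + 1))"
  have t0: "t > 0" using m0 N0 by (simp add: t_def)
  have tN: "t * N < m"
  proof -
    have "t * N = m * N / (2 * (N + 1))" by (simp add: t_def)
    also have "\<dots> < m" using m0 N0 by (simp add: field_simps) (smt (verit) mult_nonneg_nonneg)
    finally show ?thesis .
  qed
  have small: "norm y < dv'" "norm y < dw'" "u + y \<in> V" if "norm y \<le> t * N" for y
  proof -
    have "norm y < m" using that tN by linarith
    then show "norm y < dv'" "norm y < dw'" "u + y \<in> V"
      using r by (auto simp: m_def dist_norm intro!: subsetD[OF r(2)])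
  qed
  have dv2: "\<bar>D (u + y) v - D u v - Bv y\<bar> \<le> e * norm y" if "norm y < dv'" for y
    using dv'(2)[of "u + y"] that by simp
  have dw2: "\<bar>D (u + y) w - D u w - Bw y\<bar> \<le> e * norm y" if "norm y < dw'" for y
    using dw'(2)[of "u + y"] that by simp
  have Bvl: "bounded_linear Bv" using dv has_derivative_bounded_linear by blast
  have Bwl: "bounded_linear Bw" using dw has_derivative_bounded_linear by blast
  have A: "\<bar>(g (u + t *\<^sub>R w + t *\<^sub>R v) - g (u + t *\<^sub>R v) - g (u + t *\<^sub>R w) + g u) - t^2 * Bv w\<bar>
           \<le> e * t^2 * (2 * norm v + norm w)"
    by (rule delta_bound[OF t0 _ _ dg Bvl]) (use small dv2 e0 in \<open>auto simp: N_def\<close>)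
  have B: "\<bar>(g (u + t *\<^sub>R v + t *\<^sub>R w) - g (u + t *\<^sub>R w) - g (u + t *\<^sub>R v) + g u) - t^2 * Bw v\<bar>
           \<le> e * t^2 * (2 * norm w + norm v)"
    by (rule delta_bound[OF t0 _ _ dg Bwl]) (use small dw2 e0 in \<open>auto simp: N_def add.commute\<close>)
  have eq: "g (u + t *\<^sub>R v + t *\<^sub>R w) = g (u + t *\<^sub>R w + t *\<^sub>R v)" by (simp add: add_ac)
  have "t^2 * c \<le> e * t^2 * (2 * norm v + norm w) + e * t^2 * (2 * norm w + norm v)"
    using A B eq unfolding c_def by (simp add: abs_mult[symmetric]) (smt (verit) right_diff_distrib abs_mult zero_le_power2 abs_of_nonneg)
  also have "\<dots> = t^2 * (3 * e * N)" by (simp add: N_def algebra_simps)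
  finally have "c \<le> 3 * e * N" using t0 by simp
  moreover have "3 * e * N < c"
  proof -
    have "3 * e * N = c * (3 * N) / (4 * N + 1)" by (simp add: e_def)
    also have "\<dots> < c" using c0 N0 by (simp add: field_simps) (smt (verit) mult_nonneg_nonneg)
    finally show ?thesis .
  qed
  ultimately show False by simp
qed

lemma smooth_has_deriv:
  assumes "smooth_on V g" "open V" "x \<in> V"
  shows "(g has_derivative frechet_derivative g (at x)) (at x)"
proof -
  have "Ck_on (Suc 0) V g" using assms(1) unfolding smooth_on_def by blast
  then have "g differentiable_on V" by simp
  then have "g differentiable (at x)" using assms differentiable_on_eq_differentiable_at by blast
  then show ?thesis using frechet_derivative_works by blast
qed

lemma smooth_partial:
  assumes "smooth_on V g" "b \<in> Basis"
  shows "smooth_on V (\<lambda>x. frechet_derivative g (at x) b)"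
  using assms unfolding smooth_on_def by (metis Ck_on.simps(2))

lemma hess_deriv:
  fixes g :: "real^3 \<Rightarrow> real"
  assumes sm: "smooth_on V g" and V: "open V" "u \<in> V"
  shows "((\<lambda>x. frechet_derivative g (at x) v) has_derivative hess g u v) (at u)"
proof -
  define F where "F b x = frechet_derivative g (at x) b" for b x
  have dF: "(F b has_derivative frechet_derivative (F b) (at u)) (at u)" if "b \<in> Basis" for b
    unfolding F_def using smooth_has_deriv[OF smooth_partial[OF sm that] V] .
  have "((\<lambda>x. \<Sum>b\<in>Basis. (v \<bullet> b) * F b x) has_derivative
          (\<lambda>h. \<Sum>b\<in>Basis. (v \<bullet> b) * frechet_derivative (F b) (at u) h)) (at u)"
    by (intro has_derivative_sum has_derivative_mult_right dF)
  moreover have "(\<Sum>b\<in>Basis. (v \<bullet> b) * F b x) = frechet_derivative g (at x) v" if "x \<in> V" for x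
  proof -
    have "linear (frechet_derivative g (at x))"
      using smooth_has_deriv[OF sm V(1) that] has_derivative_linear by blast
    then have "frechet_derivative g (at x) v = frechet_derivative g (at x) (\<Sum>b\<in>Basis. (v \<bullet> b) *\<^sub>R b)"
      by (simp add: euclidean_representation)
    also have "\<dots> = (\<Sum>b\<in>Basis. (v \<bullet> b) * F b x)"
      using \<open>linear _\<close> by (simp add: linear_sum linear_cmul F_def)
    finally show ?thesis by simp
  qed
  ultimately have "((\<lambda>x. frechet_derivative g (at x) v) has_derivative
          (\<lambda>h. \<Sum>b\<in>Basis. (v \<bullet> b) * frechet_derivative (F b) (at u) h)) (at u)"
    using has_derivative_transform_within_open V by (smt (verit, del_insts))
  then have "(\<lambda>x. frechet_derivative g (at x) v) differentiable (at u)"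
    unfolding differentiable_def by blast
  then show ?thesis unfolding hess_def using frechet_derivative_works by blast
qed

lemma hess_linear:
  fixes g :: "real^3 \<Rightarrow> real"
  assumes "smooth_on V g" "open V" "u \<in> V"
  shows "bounded_linear (hess g u v)"
  using hess_deriv[OF assms] has_derivative_bounded_linear by blast

lemma hess_sym:
  fixes g :: "real^3 \<Rightarrow> real"
  assumes sm: "smooth_on V g" and V: "open V" "u \<in> V"
  shows "hess g u v w = hess g u w v"
  by (rule deriv_sym_core[OF V smooth_has_deriv[OF sm V(1)] hess_deriv[OF assms] hess_deriv[OF assms]])

lemma index0:
  assumes "\<forall>w. hess g u w w \<ge> 0"
  shows "index_at g u = 0"
proof -
  have "{dim W |W. subspace W \<and> (\<forall>w\<in>W. w \<noteq> 0 \<longrightarrow> hess g u w w < 0)} = {0}"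
  proof (intro equalityI subsetI)
    fix x assume "x \<in> {dim W |W. subspace W \<and> (\<forall>w\<in>W. w \<noteq> 0 \<longrightarrow> hess g u w w < 0)}"
    then obtain W where W: "x = dim W" "\<forall>w\<in>W. w \<noteq> 0 \<longrightarrow> hess g u w w < 0" by blast
    have "W \<subseteq> {0}"
    proof
      fix x assume x: "x \<in> W"
      show "x \<in> {0}"
      proof (rule ccontr)
        assume "x \<notin> {0}"
        then have "hess g u x x < 0" using W(2) x by auto
        then show False using assms by (meson not_le)
      qed
    qed
    then show "x \<in> {0}" using W(1) dim_eq_0 by auto
  next
    fix x assume "x \<in> ({0} :: nat set)"
    then show "x \<in> {dim W |W. subspace W \<and> (\<forall>w\<in>W. w \<noteq> 0 \<longrightarrow> hess g u w w < 0)}"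
      by (intro CollectI exI[of _ "{0}"]) (auto simp: subspace_0 dim_eq_0)
  qed
  then show ?thesis unfolding index_at_def by simp
qed

lemma neg_def_from_semidef:
  fixes g :: "real^3 \<Rightarrow> real"
  assumes sm: "smooth_on V g" and V: "open V" "u \<in> V"
    and neg: "\<forall>w. hess g u w w \<le> 0" and nd: "nondeg_at g u"
    and w0: "w \<noteq> 0"
  shows "hess g u w w < 0"
proof (rule ccontr)
  assume "\<not> hess g u w w < 0"
  then have q0: "hess g u w w = 0" using neg by (meson le_less)
  define B where "B = hess g u"
  have lin: "linear (B x)" for x unfolding B_def using hess_linear[OF assms(1-3)] bounded_linear.linear by blast
  have sym: "B x y = B y x" for x y unfolding B_def by (rule hess_sym[OF sm V])
  have add2: "B x (y + z) = B x y + B x z" for x y z using lin linear_add by blast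
  have sc2: "B x (c *\<^sub>R y) = c * B x y" for x y c using lin[of x] linear_scale by fastforce
  have add1: "B (y + z) x = B y x + B z x" for x y z using add2 sym by metis
  have sc1: "B (c *\<^sub>R y) x = c * B y x" for x y c using sc2 sym by metis
  have allz: "B w v = 0" for v
  proof (rule ccontr)
    assume cne: "B w v \<noteq> 0"
    define c where "c = B w v"
    define q where "q = B v v"
    have qn: "q \<le> 0" using neg unfolding q_def B_def by blast
    define d where "d = 1 - q"
    have d1: "d \<ge> 1" using qn by (simp add: d_def)
    define t where "t = c / d"
    have exp: "B (w + t *\<^sub>R v) (w + t *\<^sub>R v) = 2 * t * c + t^2 * q"
      using q0 unfolding c_def q_def B_def[symmetric]
      by (simp add: add1 add2 sc1 sc2 sym[of v w] power2_eq_square algebra_simps)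
    have "(2 * t * c + t^2 * q) * d^2 = c^2 * (2 * d + q)"
      using d1 unfolding t_def by (simp add: field_simps power2_eq_square)
    also have "2 * d + q = 2 - q" by (simp add: d_def)
    finally have "(2 * t * c + t^2 * q) * d^2 = c^2 * (2 - q)" .
    moreover have "c^2 * (2 - q) > 0" using cne qn unfolding c_def by simp
    ultimately have "2 * t * c + t^2 * q > 0" using d1
      by (metis zero_less_mult_pos2 zero_less_power less_le_trans zero_less_one)
    moreover have "B (w + t *\<^sub>R v) (w + t *\<^sub>R v) \<le> 0" using neg unfolding B_def by blast
    ultimately show False using exp by simp
  qed
  then have "w = 0" using nd unfolding nondeg_at_def B_def by blast
  then show False using w0 by simp
qed

lemma index3:
  fixes g :: "real^3 \<Rightarrow> real"
  assumes sm: "smooth_on V g" and V: "open V" "u \<in> V"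
    and neg: "\<forall>w. hess g u w w \<le> 0" and nd: "nondeg_at g u"
  shows "index_at g u = 3"
proof -
  let ?S = "{dim W |W. subspace W \<and> (\<forall>w\<in>W. w \<noteq> 0 \<longrightarrow> hess g u w w < 0)}"
  have sub: "?S \<subseteq> {..3}"
    using dim_subset_UNIV_cart[where ?'n = 3] by auto
  have "3 \<in> ?S"
    using neg_def_from_semidef[OF assms]
    by (intro CollectI exI[of _ UNIV]) (auto simp: dim_UNIV)
  then have "Max ?S = 3"
    using sub by (intro Max_eqI) (auto intro: finite_subset)
  then show ?thesis unfolding index_at_def by simp
qed

lemma chart_props:
  assumes "chart3 M \<phi> V"
  shows "open V" "\<phi> ` V \<subseteq> M" "continuous_on V \<phi>" "openin (top_of_set M) (\<phi> ` V)"
  using assms unfolding chart3_def homeomorphism_def by (auto dest: openin_imp_subset)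

lemma chart_smooth:
  assumes "smooth_fun_on M f" "chart3 M \<phi> V"
  shows "smooth_on V (f \<circ> \<phi>)"
  using assms unfolding smooth_fun_on_def by blast

lemma local_to_chart:
  assumes ch: "chart3 M \<phi> V" and u: "u \<in> V" "\<phi> u = p"
    and loc: "\<exists>e>0. \<forall>z\<in>M. dist z p < e \<longrightarrow> P (f z)"
  shows "eventually (\<lambda>y. P ((f \<circ> \<phi>) y)) (at u)"
proof -
  obtain e where e: "e > 0" "\<And>z. z \<in> M \<Longrightarrow> dist z p < e \<Longrightarrow> P (f z)" using loc by blast
  have "isCont \<phi> u" using chart_props[OF ch] u continuous_on_eq_continuous_at by blast
  then obtain d where d: "d > 0" "\<And>y. dist y u < d \<Longrightarrow> dist (\<phi> y) (\<phi> u) < e"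
    using e(1) unfolding continuous_at_eps_delta by blast
  obtain r where r: "r > 0" "ball u r \<subseteq> V" using chart_props(1)[OF ch] u open_contains_ball by blast
  have "P ((f \<circ> \<phi>) y)" if y: "dist y u < min d r" for y
  proof -
    have "y \<in> V" using r y by (auto simp: dist_commute intro!: subsetD[OF r(2)])
    then have "\<phi> y \<in> M" using chart_props(2)[OF ch] by blast
    then show "P ((f \<circ> \<phi>) y)" using d y u by (auto intro: e(2))
  qed
  moreover have "min d r > 0" using d r by simp
  ultimately show ?thesis unfolding eventually_at by blast
qed

lemma locmin_chart:
  assumes sf: "smooth_fun_on M f" and ch: "chart3 M \<phi> V" and u: "u \<in> V" "\<phi> u = p"
    and loc: "\<exists>e>0. \<forall>z\<in>M. dist z p < e \<longrightarrow> f p \<le> f z"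
  shows "frechet_derivative (f \<circ> \<phi>) (at u) = (\<lambda>_. 0)" "\<forall>w. hess (f \<circ> \<phi>) u w w \<ge> 0"
proof -
  have sm: "smooth_on V (f \<circ> \<phi>)" using chart_smooth[OF sf ch] .
  have V: "open V" using chart_props[OF ch] by blast
  have ev: "eventually (\<lambda>y. (f \<circ> \<phi>) u \<le> (f \<circ> \<phi>) y) (at u)"
    using local_to_chart[OF ch u, of "\<lambda>x. f p \<le> x" f] loc u by simp
  show "frechet_derivative (f \<circ> \<phi>) (at u) = (\<lambda>_. 0)"
    by (rule has_derivative_local_min[OF smooth_has_deriv[OF sm V u(1)] ev])
  show "\<forall>w. hess (f \<circ> \<phi>) u w w \<ge> 0"
    using second_order_min[OF V u(1) smooth_has_deriv[OF sm V] hess_deriv[OF sm V u(1)] ev] by blast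
qed

lemma locmax_chart:
  assumes sf: "smooth_fun_on M f" and ch: "chart3 M \<phi> V" and u: "u \<in> V" "\<phi> u = p"
    and loc: "\<exists>e>0. \<forall>z\<in>M. dist z p < e \<longrightarrow> f z \<le> f p"
  shows "frechet_derivative (f \<circ> \<phi>) (at u) = (\<lambda>_. 0)" "\<forall>w. hess (f \<circ> \<phi>) u w w \<le> 0"
proof -
  have sm: "smooth_on V (f \<circ> \<phi>)" using chart_smooth[OF sf ch] .
  have V: "open V" using chart_props[OF ch] by blast
  have ev: "eventually (\<lambda>y. (f \<circ> \<phi>) y \<le> (f \<circ> \<phi>) u) (at u)"
    using local_to_chart[OF ch u, of "\<lambda>x. x \<le> f p" f] loc u by simp
  show "frechet_derivative (f \<circ> \<phi>) (at u) = (\<lambda>_. 0)"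
    by (rule has_derivative_local_max[OF smooth_has_deriv[OF sm V u(1)] ev])
  have ev2: "eventually (\<lambda>y. - (f \<circ> \<phi>) u \<le> - (f \<circ> \<phi>) y) (at u)" using ev by simp
  show "\<forall>w. hess (f \<circ> \<phi>) u w w \<le> 0"
  proof
    fix w
    have "0 \<le> - hess (f \<circ> \<phi>) u w w"
      using second_order_min[of V u "\<lambda>x. - (f \<circ> \<phi>) x" "\<lambda>x h. - frechet_derivative (f \<circ> \<phi>) (at x) h" w
          "\<lambda>h. - hess (f \<circ> \<phi>) u w h", OF V u(1) _ _ ev2]
        has_derivative_minus[OF smooth_has_deriv[OF sm V]] has_derivative_minus[OF hess_deriv[OF sm V u(1)]]
      by blast
    then show "hess (f \<circ> \<phi>) u w w \<le> 0" by simp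
  qed
qed

lemma locmin_crit:
  assumes sf: "smooth_fun_on M f" and p: "p \<in> M"
    and loc: "\<exists>e>0. \<forall>z\<in>M. dist z p < e \<longrightarrow> f p \<le> f z"
  shows "p \<in> crit_points M f"
  unfolding crit_points_def using p locmin_chart(1)[OF sf _ _ _ loc] by blast

lemma locmax_crit:
  assumes sf: "smooth_fun_on M f" and p: "p \<in> M"
    and loc: "\<exists>e>0. \<forall>z\<in>M. dist z p < e \<longrightarrow> f z \<le> f p"
  shows "p \<in> crit_points M f"
  unfolding crit_points_def using p locmax_chart(1)[OF sf _ _ _ loc] by blast

lemma locmin_index0:
  assumes man: "smooth_3_manifold M" and sf: "smooth_fun_on M f" and p: "p \<in> M"
    and loc: "\<exists>e>0. \<forall>z\<in>M. dist z p < e \<longrightarrow> f p \<le> f z"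
  shows "morse_index M f p 0"
proof -
  obtain \<phi> V where ch: "chart3 M \<phi> V" "p \<in> \<phi> ` V" using man p unfolding smooth_3_manifold_def by blast
  then obtain u where u: "u \<in> V" "\<phi> u = p" by blast
  have "index_at (f \<circ> \<phi>) u = 0" by (rule index0, rule locmin_chart(2)[OF sf ch(1) u loc])
  then show ?thesis unfolding morse_index_def using ch u by blast
qed

lemma locmax_index3:
  assumes man: "smooth_3_manifold M" and mf: "morse_function M f" and p: "p \<in> M"
    and loc: "\<exists>e>0. \<forall>z\<in>M. dist z p < e \<longrightarrow> f z \<le> f p"
  shows "morse_index M f p 3"
proof -
  have sf: "smooth_fun_on M f" using mf unfolding morse_function_def by blast
  obtain \<phi> V where ch: "chart3 M \<phi> V" "p \<in> \<phi> ` V" using man p unfolding smooth_3_manifold_def by blast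
  then obtain u where u: "u \<in> V" "\<phi> u = p" by blast
  have cp: "p \<in> crit_points M f" by (rule locmax_crit[OF sf p loc])
  have nd: "nondeg_at (f \<circ> \<phi>) u" using mf cp ch u unfolding morse_function_def by blast
  have "index_at (f \<circ> \<phi>) u = 3"
    by (rule index3[OF chart_smooth[OF sf ch(1)] chart_props(1)[OF ch(1)] u(1)
          locmax_chart(2)[OF sf ch(1) u loc] nd])
  then show ?thesis unfolding morse_index_def using ch u by blast
qed

lemma regular_below:
  assumes sf: "smooth_fun_on M f" and p: "p \<in> M" "p \<notin> crit_points M f" and e: "e > 0"
  shows "\<exists>z\<in>M. dist z p < e \<and> f z < f p"
  using locmin_crit[OF sf p(1)] p(2) e by (meson not_le)

lemma regular_above:
  assumes sf: "smooth_fun_on M f" and p: "p \<in> M" "p \<notin> crit_points M f" and e: "e > 0"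
  shows "\<exists>z\<in>M. dist z p < e \<and> f p < f z"
  using locmax_crit[OF sf p(1)] p(2) e by (meson not_le)

lemma f_continuous:
  assumes man: "smooth_3_manifold M" and sf: "smooth_fun_on M f"
  shows "continuous_on M f"
  unfolding continuous_on_iff
proof (intro ballI allI impI)
  fix p e assume p: "p \<in> M" and e: "(e::real) > 0"
  obtain \<phi> V where ch: "chart3 M \<phi> V" "p \<in> \<phi> ` V" using man p unfolding smooth_3_manifold_def by blast
  obtain \<psi> where hom: "homeomorphism V (\<phi> ` V) \<phi> \<psi>" using ch(1) unfolding chart3_def by blast
  have c1: "continuous_on V (f \<circ> \<phi>)"
    using chart_smooth[OF sf ch(1)] unfolding smooth_on_def by (metis Ck_on.simps(1))
  have c2: "continuous_on (\<phi> ` V) \<psi>" "\<psi> ` (\<phi> ` V) \<subseteq> V" using hom unfolding homeomorphism_def by auto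
  have "continuous_on (\<phi> ` V) ((f \<circ> \<phi>) \<circ> \<psi>)" by (rule continuous_on_compose[OF c2(1) continuous_on_subset[OF c1 c2(2)]])
  moreover have "((f \<circ> \<phi>) \<circ> \<psi>) x = f x" if "x \<in> \<phi> ` V" for x
    using hom that unfolding homeomorphism_def by auto
  ultimately have cf: "continuous_on (\<phi> ` V) f" using continuous_on_eq by blast
  obtain d1 where d1: "d1 > 0" "\<And>z. z \<in> \<phi> ` V \<Longrightarrow> dist z p < d1 \<Longrightarrow> dist (f z) (f p) < e"
    using cf ch(2) e unfolding continuous_on_iff by metis
  obtain d2 where d2: "d2 > 0" "\<And>z. z \<in> M \<Longrightarrow> dist z p < d2 \<Longrightarrow> z \<in> \<phi> ` V"
    using chart_props(4)[OF ch(1)] ch(2) unfolding openin_euclidean_subtopology_iff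
    by (metis dist_commute)
  show "\<exists>d>0. \<forall>z\<in>M. dist z p < d \<longrightarrow> dist (f z) (f p) < e"
    by (rule exI[of _ "min d1 d2"]) (use d1 d2 in auto)
qed

lemma piece_min:
  fixes M :: "'a::metric_space set" and f :: "'a \<Rightarrow> real"
  assumes cM: "compact M" and cf: "continuous_on M f"
    and reg: "\<forall>p\<in>M. f p = a \<longrightarrow> (\<forall>e>0. \<exists>z\<in>M. dist z p < e \<and> f z < f p)"
    and A: "closed A" and B: "closed B" and cov: "{x\<in>M. f x \<le> a} \<subseteq> A \<union> B"
    and disj: "A \<inter> B \<inter> {x\<in>M. f x \<le> a} = {}" and ne: "A \<inter> {x\<in>M. f x \<le> a} \<noteq> {}"
  shows "\<exists>p\<in>A \<inter> {x\<in>M. f x \<le> a}. \<exists>e>0. \<forall>z\<in>M. dist z p < e \<longrightarrow> f p \<le> f z"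
proof -
  let ?S = "{x\<in>M. f x \<le> a}"
  have clS: "closed ?S" using continuous_on_closed_Collect_le[OF cf continuous_on_const compact_imp_closed[OF cM]] .
  have "compact (M \<inter> (A \<inter> ?S))" by (rule compact_Int_closed[OF cM]) (use A clS in auto)
  moreover have "M \<inter> (A \<inter> ?S) = A \<inter> ?S" by auto
  ultimately have cP: "compact (A \<inter> ?S)" by simp
  have "continuous_on (A \<inter> ?S) f" using cf by (rule continuous_on_subset) auto
  then obtain p where p: "p \<in> A \<inter> ?S" "\<And>y. y \<in> A \<inter> ?S \<Longrightarrow> f p \<le> f y"
    using continuous_attains_inf[OF cP ne] by blast
  have pB: "p \<notin> B" using p(1) disj by blast
  obtain e1 where e1: "e1 > 0" "\<And>z. dist z p < e1 \<Longrightarrow> z \<notin> B"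
    using B pB unfolding closed_def open_dist by (metis ComplD ComplI dist_commute)
  have inA: "z \<in> A" if "z \<in> M" "f z \<le> a" "dist z p < e1" for z
    using cov e1(2)[OF that(3)] that by blast
  show ?thesis
  proof (cases "f p < a")
    case True
    obtain e2 where e2: "e2 > 0" "\<And>z. z \<in> M \<Longrightarrow> dist z p < e2 \<Longrightarrow> dist (f z) (f p) < a - f p"
      using cf p(1) True unfolding continuous_on_iff by (metis IntD2 mem_Collect_eq diff_gt_0_iff_gt)
    have "\<forall>z\<in>M. dist z p < min e1 e2 \<longrightarrow> f p \<le> f z"
    proof (intro ballI impI)
      fix z assume z: "z \<in> M" "dist z p < min e1 e2"
      then have "f z \<le> a" using e2(2)[of z] by (auto simp: dist_real_def)
      then show "f p \<le> f z" using inA z by (intro p(2)) auto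
    qed
    then show ?thesis using p(1) e1 e2 by (metis min_less_iff_conj)
  next
    case False
    then have "f p = a" using p(1) by auto
    then obtain z where z: "z \<in> M" "dist z p < e1" "f z < f p" using reg p(1) e1(1) by blast
    then have "z \<in> A \<inter> ?S" using inA \<open>f p = a\<close> by auto
    then show ?thesis using p(2) z(3) by fastforce
  qed
qed

lemma sub_connected:
  fixes M :: "'a::metric_space set" and f :: "'a \<Rightarrow> real"
  assumes cM: "compact M" and cf: "continuous_on M f"
    and reg: "\<forall>p\<in>M. f p = a \<longrightarrow> (\<forall>e>0. \<exists>z\<in>M. dist z p < e \<and> f z < f p)"
    and uniq: "\<And>p q. p \<in> M \<Longrightarrow> q \<in> M \<Longrightarrow> (\<exists>e>0. \<forall>z\<in>M. dist z p < e \<longrightarrow> f p \<le> f z)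
       \<Longrightarrow> (\<exists>e>0. \<forall>z\<in>M. dist z q < e \<longrightarrow> f q \<le> f z) \<Longrightarrow> p = q"
  shows "connected {x\<in>M. f x \<le> a}"
proof (rule ccontr)
  assume "\<not> connected {x\<in>M. f x \<le> a}"
  then obtain A B where AB: "closed A" "closed B" "{x\<in>M. f x \<le> a} \<subseteq> A \<union> B"
    "A \<inter> B \<inter> {x\<in>M. f x \<le> a} = {}" "A \<inter> {x\<in>M. f x \<le> a} \<noteq> {}" "B \<inter> {x\<in>M. f x \<le> a} \<noteq> {}"
    unfolding connected_closed by blast
  obtain p where p: "p \<in> A \<inter> {x\<in>M. f x \<le> a}" "\<exists>e>0. \<forall>z\<in>M. dist z p < e \<longrightarrow> f p \<le> f z"
    using piece_min[OF cM cf reg AB(1-5)] by blast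
  obtain q where q: "q \<in> B \<inter> {x\<in>M. f x \<le> a}" "\<exists>e>0. \<forall>z\<in>M. dist z q < e \<longrightarrow> f q \<le> f z"
    using piece_min[OF cM cf reg AB(2,1) _ _ AB(6)] AB(3,4) by blast
  have "p = q" using uniq p q by blast
  then show False using p q AB(4) by blast
qed

lemma manifold_lpc:
  assumes man: "smooth_3_manifold M"
  shows "locally path_connected M"
  unfolding locally_path_connected
proof (intro allI impI)
  fix W x assume Wx: "openin (top_of_set M) W \<and> x \<in> W"
  then have xM: "x \<in> M" using openin_imp_subset by blast
  obtain \<phi> V where ch: "chart3 M \<phi> V" "x \<in> \<phi> ` V" using man xM unfolding smooth_3_manifold_def by blast
  obtain \<psi> where hom: "homeomorphism V (\<phi> ` V) \<phi> \<psi>" using ch(1) unfolding chart3_def by blast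
  have lT: "locally path_connected (\<phi> ` V)"
  proof (rule homeomorphism_locally_imp[OF open_imp_locally_path_connected[OF chart_props(1)[OF ch(1)]] hom])
    fix S S' assume "path_connected S" "homeomorphism S S' \<phi> \<psi>"
    then show "path_connected S'" unfolding homeomorphism_def
      using path_connected_continuous_image by blast
  qed
  have T: "openin (top_of_set M) (\<phi> ` V)" "\<phi> ` V \<subseteq> M" using chart_props[OF ch(1)] by auto
  have "openin (top_of_set M) (W \<inter> \<phi> ` V)" using Wx T(1) by blast
  then have "openin (top_of_set (\<phi> ` V)) (W \<inter> \<phi> ` V)"
    using openin_subset_trans T(2) by blast
  then obtain U where U: "openin (top_of_set (\<phi> ` V)) U" "path_connected U" "x \<in> U" "U \<subseteq> W \<inter> \<phi> ` V"
    using lT Wx ch(2) unfolding locally_path_connected by blast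
  show "\<exists>U. openin (top_of_set M) U \<and> path_connected U \<and> x \<in> U \<and> U \<subseteq> W"
    using U openin_trans[OF U(1) T(1)] by blast
qed

lemma int_valued_constant:
  fixes k :: "'a::topological_space \<Rightarrow> complex"
  assumes "connected S" "continuous_on S k" "\<And>x. x \<in> S \<Longrightarrow> k x \<in> \<int>"
  shows "k constant_on S"
proof (rule continuous_discrete_range_constant[OF assms(1,2)])
  fix x assume x: "x \<in> S"
  show "\<exists>e>0. \<forall>y. y \<in> S \<and> k y \<noteq> k x \<longrightarrow> e \<le> norm (k y - k x)"
  proof (intro exI[of _ 1] conjI allI impI)
    fix y assume y: "y \<in> S \<and> k y \<noteq> k x"
    obtain m where m: "k x = of_int m" using assms(3)[OF x] Ints_cases by metis
    obtain n where n: "k y = of_int n" using assms(3) y Ints_cases by metis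
    have "m \<noteq> n" using m n y by auto
    then have "k y - k x = of_int (n - m)" "\<bar>real_of_int (n - m)\<bar> \<ge> 1" using m n by auto
    then show "1 \<le> norm (k y - k x)" by (simp only: norm_of_int)
  qed simp
qed

lemma level_connected_core:
  fixes M :: "'a::real_normed_vector set" and f :: "'a \<Rightarrow> real"
  assumes cM: "compact M" and cf: "continuous_on M f" and sc: "simply_connected M"
    and lpc: "locally path_connected M"
    and c1: "connected {x\<in>M. f x \<le> a}" and c2: "connected {x\<in>M. a \<le> f x}"
  shows "connected {x\<in>M. f x = a}"
proof (rule ccontr)
  let ?L = "{x\<in>M. f x = a}"
  let ?S1 = "{x\<in>M. f x \<le> a}"
  let ?S2 = "{x\<in>M. a \<le> f x}"
  have clM: "closed M" using cM compact_imp_closed by blast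
  have clS1: "closed ?S1" using continuous_on_closed_Collect_le[OF cf continuous_on_const clM] .
  have clS2: "closed ?S2" using continuous_on_closed_Collect_le[OF continuous_on_const cf clM] .
  have Leq: "?L = ?S1 \<inter> ?S2" by auto
  have clL: "closed ?L" using clS1 clS2 Leq by auto
  assume "\<not> connected ?L"
  then obtain A0 B0 where AB: "closed A0" "closed B0" "?L \<subseteq> A0 \<union> B0"
    "A0 \<inter> B0 \<inter> ?L = {}" "A0 \<inter> ?L \<noteq> {}" "B0 \<inter> ?L \<noteq> {}"
    unfolding connected_closed by blast
  define A where "A = A0 \<inter> ?L"
  define B where "B = B0 \<inter> ?L"
  have clA: "closed A" and clB: "closed B" using AB clL by (auto simp: A_def B_def)
  have Ane: "A \<noteq> {}" and Bne: "B \<noteq> {}" using AB by (auto simp: A_def B_def)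
  have ABd: "A \<inter> B = {}" using AB by (auto simp: A_def B_def)
  have LAB: "?L = A \<union> B" using AB by (auto simp: A_def B_def)
  have iA: "infdist x A = 0 \<longleftrightarrow> x \<in> A" for x using in_closure_iff_infdist_zero[OF Ane] clA closure_closed by metis
  have iB: "infdist x B = 0 \<longleftrightarrow> x \<in> B" for x using in_closure_iff_infdist_zero[OF Bne] clB closure_closed by metis
  have den: "infdist x A + infdist x B \<noteq> 0" for x
    using iA iB ABd infdist_nonneg[of x A] infdist_nonneg[of x B] by (smt (verit) disjoint_iff)
  define h where "h x = pi * infdist x B / (infdist x A + infdist x B)" for x
  have hA: "h x = pi" if "x \<in> A" for x
  proof -
    have "infdist x A = 0" using iA that by blast
    moreover have "infdist x B \<noteq> 0" using iB that ABd by blast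
    ultimately show ?thesis by (simp add: h_def)
  qed
  have hB: "h x = 0" if "x \<in> B" for x using iB that by (simp add: h_def)
  have ch: "continuous_on M h" unfolding h_def
    by (intro continuous_intros continuous_on_infdist continuous_on_id) (use den in auto)
  have eqL: "exp (\<i> * complex_of_real (h x)) = exp (- (\<i> * complex_of_real (h x)))" if "x \<in> ?L" for x
  proof -
    have "x \<in> A \<union> B" using LAB that by auto
    then show ?thesis
    proof
      assume "x \<in> A" then show ?thesis using hA[of x] by (simp add: exp_minus exp_pi_i')
    next
      assume "x \<in> B" then show ?thesis using hB by simp
    qed
  qed
  define G0 where "G0 x = (if f x \<le> a then exp (\<i> * of_real (h x)) else exp (- (\<i> * of_real (h x))))" for x
  have M12: "M = ?S1 \<union> ?S2" by auto
  have chc: "continuous_on M (\<lambda>x. complex_of_real (h x))" by (intro continuous_intros ch)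
  have chc1: "continuous_on ?S1 (\<lambda>x. complex_of_real (h x))" by (rule continuous_on_subset[OF chc]) auto
  have chc2: "continuous_on ?S2 (\<lambda>x. complex_of_real (h x))" by (rule continuous_on_subset[OF chc]) auto
  have cG1: "continuous_on ?S1 G" and cG2: "continuous_on ?S2 G" if "continuous_on M G" for G
    using continuous_on_subset[OF that] by auto
  have cG0: "continuous_on M G0"
  proof -
    have "continuous_on (?S1 \<union> ?S2) G0" unfolding G0_def
    proof (rule continuous_on_cases_local)
      show "closedin (top_of_set (?S1 \<union> ?S2)) ?S1" using clS1 by (intro closed_subset) auto
      show "closedin (top_of_set (?S1 \<union> ?S2)) ?S2" using clS2 by (intro closed_subset) auto
      show "continuous_on ?S1 (\<lambda>x. exp (\<i> * complex_of_real (h x)))"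
        by (intro continuous_intros chc1)
      show "continuous_on ?S2 (\<lambda>x. exp (- (\<i> * complex_of_real (h x))))"
        by (intro continuous_intros chc2)
    next
      fix x assume x: "x \<in> ?S1 \<and> \<not> f x \<le> a \<or> x \<in> ?S2 \<and> f x \<le> a"
      then show "exp (\<i> * complex_of_real (h x)) = exp (- (\<i> * complex_of_real (h x)))"
        using eqL by auto
    qed
    then show ?thesis using M12 by simp
  qed
  have nz: "G0 x \<noteq> 0" for x by (simp add: G0_def)
  obtain G where cG: "continuous_on M G" and G: "\<And>x. x \<in> M \<Longrightarrow> G0 x = exp (G x)"
    using continuous_logarithm_on_simply_connected[OF cG0 sc lpc] nz by blast
  define k1 where "k1 x = (G x - \<i> * of_real (h x)) / (2 * pi * \<i>)" for x
  define k2 where "k2 x = (G x + \<i> * of_real (h x)) / (2 * pi * \<i>)" for x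
  have ck1: "continuous_on ?S1 k1" unfolding k1_def
    by (intro continuous_intros chc1 cG1 cG) simp
  have ck2: "continuous_on ?S2 k2" unfolding k2_def
    by (intro continuous_intros chc2 cG2 cG) simp
  have k1Z: "k1 x \<in> \<int>" if "x \<in> ?S1" for x
  proof -
    have "exp (G x) = exp (\<i> * of_real (h x))" using G[of x] that by (simp add: G0_def)
    then obtain n :: int where "G x = \<i> * of_real (h x) + of_int (2 * n) * pi * \<i>" by (auto simp: exp_eq)
    then have "k1 x = of_int n" by (simp add: k1_def field_simps)
    then show ?thesis by simp
  qed
  have k2Z: "k2 x \<in> \<int>" if "x \<in> ?S2" for x
  proof -
    have "exp (G x) = exp (- (\<i> * of_real (h x)))" using G[of x] that eqL[of x]
      by (cases "f x \<le> a") (auto simp: G0_def)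
    then obtain n :: int where "G x = - (\<i> * of_real (h x)) + of_int (2 * n) * pi * \<i>" by (auto simp: exp_eq)
    then have "k2 x = of_int n" by (simp add: k2_def field_simps)
    then show ?thesis by simp
  qed
  obtain d1 where d1: "\<And>x. x \<in> ?S1 \<Longrightarrow> k1 x = d1"
    using int_valued_constant[OF c1 ck1 k1Z] unfolding constant_on_def by blast
  obtain d2 where d2: "\<And>x. x \<in> ?S2 \<Longrightarrow> k2 x = d2"
    using int_valued_constant[OF c2 ck2 k2Z] unfolding constant_on_def by blast
  obtain xa where xa: "xa \<in> A" using Ane by blast
  obtain xb where xb: "xb \<in> B" using Bne by blast
  have xaL: "xa \<in> ?S1" "xa \<in> ?S2" and xbL: "xb \<in> ?S1" "xb \<in> ?S2" using xa xb LAB by auto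
  have "k1 xb = k2 xb" using hB[OF xb] by (simp add: k1_def k2_def)
  then have "d1 = d2" using d1 d2 xbL by metis
  then have "k1 xa = k2 xa" using d1 d2 xaL by metis
  then have "G xa - \<i> * pi = G xa + \<i> * pi" using hA[OF xa] by (simp add: k1_def k2_def)
  then show False by (simp add: complex_eq_iff)
qed

theorem lemma4:
  fixes M :: "'a::euclidean_space set" and f :: "'a \<Rightarrow> real" and a :: real
  assumes "smooth_3_manifold M" and "compact M" and "simply_connected M"
    and "morse_function M f"
    and "card {p\<in>crit_points M f. morse_index M f p 0} = 1"
    and "card {p\<in>crit_points M f. morse_index M f p 3} = 1"
    and "\<forall>p\<in>crit_points M f. f p \<noteq> a"
  shows "connected {x\<in>M. f x = a}"
proof -
  note man = assms(1) and cM = assms(2) and mf = assms(4)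
  have sf: "smooth_fun_on M f" using mf unfolding morse_function_def by blast
  have cf: "continuous_on M f" by (rule f_continuous[OF man sf])
  have lpc: "locally path_connected M" by (rule manifold_lpc[OF man])
  have notcrit: "p \<notin> crit_points M f" if "p \<in> M" "f p = a" for p using assms(7) that by blast
  have reg1: "\<forall>p\<in>M. f p = a \<longrightarrow> (\<forall>e>0. \<exists>z\<in>M. dist z p < e \<and> f z < f p)"
    using regular_below[OF sf] notcrit by blast
  obtain p0 where p0: "{p\<in>crit_points M f. morse_index M f p 0} = {p0}" using assms(5) card_1_singletonE by blast
  obtain p3 where p3: "{p\<in>crit_points M f. morse_index M f p 3} = {p3}" using assms(6) card_1_singletonE by blast
  have uniq0: "p = q" if "p \<in> M" "q \<in> M" "\<exists>e>0. \<forall>z\<in>M. dist z p < e \<longrightarrow> f p \<le> f z"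
     "\<exists>e>0. \<forall>z\<in>M. dist z q < e \<longrightarrow> f q \<le> f z" for p q
  proof -
    have "p \<in> {p\<in>crit_points M f. morse_index M f p 0}"
      using locmin_crit[OF sf that(1,3)] locmin_index0[OF man sf that(1,3)] by blast
    moreover have "q \<in> {p\<in>crit_points M f. morse_index M f p 0}"
      using locmin_crit[OF sf that(2,4)] locmin_index0[OF man sf that(2,4)] by blast
    ultimately show ?thesis using p0 by (metis singletonD)
  qed
  have c1: "connected {x\<in>M. f x \<le> a}" by (rule sub_connected[OF cM cf reg1 uniq0])
  have cf': "continuous_on M (\<lambda>x. - f x)" by (intro continuous_intros cf)
  have reg2: "\<forall>p\<in>M. - f p = - a \<longrightarrow> (\<forall>e>0. \<exists>z\<in>M. dist z p < e \<and> - f z < - f p)"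
    using regular_above[OF sf] notcrit by fastforce
  have uniq3: "p = q" if "p \<in> M" "q \<in> M" "\<exists>e>0. \<forall>z\<in>M. dist z p < e \<longrightarrow> - f p \<le> - f z"
     "\<exists>e>0. \<forall>z\<in>M. dist z q < e \<longrightarrow> - f q \<le> - f z" for p q
  proof -
    have lp: "\<exists>e>0. \<forall>z\<in>M. dist z p < e \<longrightarrow> f z \<le> f p" using that(3) by simp
    have lq: "\<exists>e>0. \<forall>z\<in>M. dist z q < e \<longrightarrow> f z \<le> f q" using that(4) by simp
    have "p \<in> {p\<in>crit_points M f. morse_index M f p 3}"
      using locmax_crit[OF sf that(1) lp] locmax_index3[OF man mf that(1) lp] by blast
    moreover have "q \<in> {p\<in>crit_points M f. morse_index M f p 3}"
      using locmax_crit[OF sf that(2) lq] locmax_index3[OF man mf that(2) lq] by blast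
    ultimately show ?thesis using p3 by (metis singletonD)
  qed
  have "connected {x\<in>M. - f x \<le> - a}" by (rule sub_connected[OF cM cf' reg2 uniq3])
  then have c2: "connected {x\<in>M. a \<le> f x}" by simp
  show ?thesis by (rule level_connected_core[OF cM cf assms(3) lpc c1 c2])
qed

end
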